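(* Let $|q|\ne1$, $q\ne0$, $x\in\mathbb C^*$ with none of $x^{\pm1},x^{\pm2}$ an integer power of $q$, and $m\in\mathbb Z$. With $LA_m=A_{m+1}C_m-A_mC_{m+1}$ and $LB_m=B_{m+1}C_m-B_mC_{m+1}$ (all at $(x,q)$), $$C_m(x,q)=\frac1{x^{-1}-x}\big(A_m(x,q)LB_m(x,q)-B_m(x,q)LA_m(x,q)\big),$$ $$C_{m+1}(x,q)=\frac1{x^{-1}-x}\big(A_{m+1}(x,q)LB_m(x,q)-B_{m+1}(x,q)LA_m(x,q)\big).$$
   Context: Notation: $(a;q)_k=\prod_{j=0}^{k-1}(1-aq^j)$. For $|q|\ne1$: $C_m(x,q)=\sum_{k\ge0}(-1)^k\frac{q^{k(k+1)/2+km}}{(x^{-1};q)_{k+1}(x;q)_{k+1}}$, $A_m(x,q)=\sum_{k\ge0}(-1)^k\frac{q^{k(k+1)/2+km}x^{k+m}}{(q;q)_k(x^2q;q)_k}$, $B_m(x,q)=A_m(x^{-1},q)$. *)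

theory Defs
  imports Complex_Main
begin

definition qpoch :: "complex \<Rightarrow> complex \<Rightarrow> nat \<Rightarrow> complex" where
  "qpoch a q k = (\<Prod>j<k. 1 - a * q ^ j)"

definition Cser :: "int \<Rightarrow> complex \<Rightarrow> complex \<Rightarrow> complex" where
  "Cser m x q = (\<Sum>k. (-1) ^ k * q powi (int k * (int k + 1) div 2 + int k * m)
      / (qpoch (inverse x) q (k + 1) * qpoch x q (k + 1)))"

definition Aser :: "int \<Rightarrow> complex \<Rightarrow> complex \<Rightarrow> complex" where
  "Aser m x q = (\<Sum>k. (-1) ^ k * q powi (int k * (int k + 1) div 2 + int k * m)
      * x powi (int k + m) / (qpoch q q k * qpoch (x ^ 2 * q) q k))"

definition Bser :: "int \<Rightarrow> complex \<Rightarrow> complex \<Rightarrow> complex" where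
  "Bser m x q = Aser m (inverse x) q"

definition LA :: "int \<Rightarrow> complex \<Rightarrow> complex \<Rightarrow> complex" where
  "LA m x q = Aser (m + 1) x q * Cser m x q - Aser m x q * Cser (m + 1) x q"

definition LB :: "int \<Rightarrow> complex \<Rightarrow> complex \<Rightarrow> complex" where
  "LB m x q = Bser (m + 1) x q * Cser m x q - Bser m x q * Cser (m + 1) x q"

end

theory Submission
  imports Defs
begin

definition cc :: "complex \<Rightarrow> complex \<Rightarrow> nat \<Rightarrow> complex" where
  "cc a q k = (-1) ^ k * q ^ (k * (k + 1) div 2) / (qpoch q q k * qpoch (a * q) q k)"

definition FF :: "complex \<Rightarrow> complex \<Rightarrow> complex \<Rightarrow> complex" where
  "FF a q = (\<lambda>z. \<Sum>k. cc a q k * z ^ k)"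

lemma summable_ratio0:
  fixes t :: "nat \<Rightarrow> complex"
  assumes rec: "\<And>k. t (Suc k) = r k * t k" and lim: "r \<longlonglongrightarrow> 0"
  shows "summable (\<lambda>k. norm (t k))"
proof -
  have "(\<lambda>k. norm (r k)) \<longlonglongrightarrow> 0" using lim by (simp add: tendsto_norm_zero)
  then have "eventually (\<lambda>k. norm (r k) < 1/2) sequentially"
    by (rule order_tendstoD(2)) simp
  then obtain N where N: "\<And>k. k \<ge> N \<Longrightarrow> norm (r k) < 1/2"
    by (auto simp: eventually_sequentially)
  show ?thesis
  proof (rule summable_ratio_test[where c="1/2" and N=N])
    fix n assume "n \<ge> N"
    then have "norm (r n) \<le> 1/2" using N[of n] by simp
    then have "norm (r n) * norm (t n) \<le> 1/2 * norm (t n)"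
      by (intro mult_right_mono) auto
    then show "norm (norm (t (Suc n))) \<le> 1/2 * norm (norm (t n))"
      by (simp add: rec norm_mult)
  qed simp
qed

lemma qpoch_Suc: "qpoch a q (Suc k) = qpoch a q k * (1 - a * q ^ k)"
  by (simp add: qpoch_def)

lemma qpoch_nz: "(\<And>j. j < k \<Longrightarrow> a * q ^ j \<noteq> 1) \<Longrightarrow> qpoch a q k \<noteq> 0"
  by (auto simp: qpoch_def)

lemma tri_Suc: "Suc k * (Suc k + 1) div 2 = k * (k + 1) div 2 + Suc k"
proof -
  have "Suc k * (Suc k + 1) = k * (k + 1) + 2 * Suc k" by (simp add: algebra_simps)
  then show ?thesis by simp
qed

locale qsetup =
  fixes a q :: complex
  assumes q0: "q \<noteq> 0" and a0: "a \<noteq> 0" and q1: "norm q \<noteq> 1" and aq: "\<And>k. a * q ^ Suc k \<noteq> 1"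
begin

lemma qpow_ne1: "q ^ Suc k \<noteq> 1"
proof
  assume "q ^ Suc k = 1"
  then have "norm q ^ Suc k = 1" by (metis norm_one norm_power)
  then have "norm q = 1"
    by (metis norm_ge_zero power_eq_imp_eq_base power_one zero_less_Suc zero_le_one)
  with q1 show False by simp
qed

lemma den_nz: "qpoch q q k \<noteq> 0" "qpoch (a * q) q k \<noteq> 0"
  using qpow_ne1 aq
  by (auto intro!: qpoch_nz simp: mult.assoc)

lemma cc_Suc: "cc a q (Suc k) = (-(q ^ Suc k) / ((1 - q ^ Suc k) * (1 - a * q ^ Suc k))) * cc a q k"
proof -
  have 1: "1 - q * q^k \<noteq> 0" "1 - a * q * q ^ k \<noteq> 0" using qpow_ne1[of k] aq[of k] by (auto simp: mult.assoc)
  show ?thesis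
  unfolding cc_def qpoch_Suc tri_Suc power_add
  using den_nz[of k] 1 by (simp add: divide_simps mult.assoc)
qed

lemma ratio_lim: "(\<lambda>k. -(q ^ Suc k) * z / ((1 - q ^ Suc k) * (1 - a * q ^ Suc k))) \<longlonglongrightarrow> 0"
proof (cases "norm q < 1")
  case True
  have w: "(\<lambda>k. q ^ Suc k) \<longlonglongrightarrow> 0"
    using LIMSEQ_power_zero[OF True] by (rule LIMSEQ_Suc)
  have "(\<lambda>k. -(q ^ Suc k) * z / ((1 - q ^ Suc k) * (1 - a * q ^ Suc k)))
        \<longlonglongrightarrow> - 0 * z / ((1 - 0) * (1 - a * 0))"
    by (intro tendsto_intros w) auto
  then show ?thesis by simp
next
  case False
  then have p: "norm (inverse q) < 1" using q1 q0
    by (simp add: norm_inverse inverse_less_1_iff)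
  have v: "(\<lambda>k. inverse q ^ Suc k) \<longlonglongrightarrow> 0"
    using LIMSEQ_power_zero[OF p] by (rule LIMSEQ_Suc)
  have "(\<lambda>k. - z * inverse q ^ Suc k / ((inverse q ^ Suc k - 1) * (inverse q ^ Suc k - a)))
        \<longlonglongrightarrow> - z * 0 / ((0 - 1) * (0 - a))"
    using a0 by (intro tendsto_intros v) auto
  moreover have "-(q ^ Suc k) * z / ((1 - q ^ Suc k) * (1 - a * q ^ Suc k)) =
     - z * inverse q ^ Suc k / ((inverse q ^ Suc k - 1) * (inverse q ^ Suc k - a))" for k
  proof -
    define w where "w = q ^ Suc k"
    have w: "w \<noteq> 0" "1 - w \<noteq> 0" "1 - a * w \<noteq> 0" using q0 qpow_ne1[of k] aq[of k] by (auto simp: w_def)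
    have "inverse q ^ Suc k = inverse w" by (simp add: w_def power_inverse)
    moreover have "-w * z / ((1 - w) * (1 - a * w)) = - z * inverse w / ((inverse w - 1) * (inverse w - a))"
      using w by (simp add: divide_simps)
    ultimately show ?thesis unfolding w_def[symmetric] by simp
  qed
  ultimately show ?thesis by simp
qed

lemma summ_norm: "summable (\<lambda>k. norm (cc a q k * z ^ k))"
proof (rule summable_ratio0)
  show "cc a q (Suc k) * z ^ Suc k =
    (-(q ^ Suc k) * z / ((1 - q ^ Suc k) * (1 - a * q ^ Suc k))) * (cc a q k * z ^ k)" for k
  proof -
    have "cc a q (Suc k) * z ^ Suc k = (-(q ^ Suc k) / ((1 - q ^ Suc k) * (1 - a * q ^ Suc k))) * cc a q k * (z ^ k * z)"
      by (simp only: cc_Suc power_Suc2)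
    also have "\<dots> = (-(q ^ Suc k) * z / ((1 - q ^ Suc k) * (1 - a * q ^ Suc k))) * (cc a q k * z ^ k)"
      by (simp only: times_divide_eq_left times_divide_eq_right mult_ac)
    finally show ?thesis .
  qed
qed (rule ratio_lim)

lemma summ: "summable (\<lambda>k. cc a q k * z ^ k)"
  by (rule summable_norm_cancel[OF summ_norm])

lemma FF_sums: "(\<lambda>k. cc a q k * z ^ k) sums FF a q z"
  unfolding FF_def by (rule summable_sums[OF summ])

lemma FF_rec: "FF a q z + a * FF a q (q^2 * z) = (1 + a - q * z) * FF a q (q * z)"
proof -
  define s where "s k = cc a q k * z ^ k * ((1 - q ^ k) * (1 - a * q ^ k))" for k
  have s0: "s 0 = 0" by (simp add: s_def)
  have sS: "s (Suc k) = -(q * z) * (cc a q k * (q * z) ^ k)" for k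
  proof -
    have 1: "1 - q ^ Suc k \<noteq> 0" "1 - a * q ^ Suc k \<noteq> 0" using qpow_ne1[of k] aq[of k] by auto
    have "s (Suc k) = (-(q ^ Suc k) / ((1 - q ^ Suc k) * (1 - a * q ^ Suc k))) * cc a q k
           * z ^ Suc k * ((1 - q ^ Suc k) * (1 - a * q ^ Suc k))"
      unfolding s_def cc_Suc ..
    also have "\<dots> = -(q ^ Suc k) * cc a q k * z ^ Suc k"
    proof -
      have gen: "\<And>D w c zz::complex. D \<noteq> 0 \<Longrightarrow> w / D * c * zz * D = w * c * zz" by simp
      have D: "(1 - q ^ Suc k) * (1 - a * q ^ Suc k) \<noteq> 0" using 1 by simp
      show ?thesis by (rule gen[OF D])
    qed
    also have "\<dots> = -(q * z) * (cc a q k * (q * z) ^ k)"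
      by (simp add: power_mult_distrib algebra_simps)
    finally show ?thesis .
  qed
  have "(\<lambda>k. s (Suc k)) sums (-(q * z) * FF a q (q * z))"
    using sums_mult[OF FF_sums[of "q * z"], of "-(q * z)"] by (simp add: sS)
  then have A: "s sums (-(q * z) * FF a q (q * z))" using s0 by (simp add: sums_Suc_iff)
  have "(\<lambda>k. cc a q k * z ^ k - (1 + a) * (cc a q k * (q * z) ^ k) + a * (cc a q k * (q^2 * z) ^ k))
     sums (FF a q z - (1 + a) * FF a q (q * z) + a * FF a q (q^2 * z))"
    by (intro sums_add sums_diff sums_mult FF_sums)
  moreover have "(\<lambda>k. cc a q k * z ^ k - (1 + a) * (cc a q k * (q * z) ^ k) + a * (cc a q k * (q^2 * z) ^ k)) = s"
  proof
    fix k
    have "(q^2) ^ k = q ^ k * q ^ k" by (simp add: power2_eq_square power_mult_distrib)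
    then show "cc a q k * z ^ k - (1 + a) * (cc a q k * (q * z) ^ k) + a * (cc a q k * (q^2 * z) ^ k) = s k"
      by (simp add: s_def power_mult_distrib algebra_simps)
  qed
  ultimately have B: "s sums (FF a q z - (1 + a) * FF a q (q * z) + a * FF a q (q^2 * z))" by simp
  from sums_unique2[OF A B] show ?thesis by (simp add: algebra_simps)
qed

lemma FF0: "FF a q 0 = 1"
  unfolding FF_def powser_zero by (simp add: cc_def qpoch_def)

lemma FF_cont: "isCont (FF a q) 0"
  unfolding FF_def by (rule isCont_powser[where K=1]) (use summ[of 1] in auto)

end

lemma Aser_FF:
  assumes y: "y \<noteq> 0" and "qsetup (y^2) q"
  shows "Aser m y q = y powi m * FF (y^2) q (q powi m * y)"
proof -
  interpret qsetup "y^2" q by fact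
  have tm: "(-1) ^ k * q powi (int k * (int k + 1) div 2 + int k * m) * y powi (int k + m)
      / (qpoch q q k * qpoch (y ^ 2 * q) q k) = y powi m * (cc (y^2) q k * (q powi m * y) ^ k)" for k
  proof -
    have e: "int k * (int k + 1) div 2 = int (k * (k + 1) div 2)"
      by (simp only: zdiv_int of_nat_mult of_nat_add of_nat_1 of_nat_numeral)
    have h1: "q powi (int k * (int k + 1) div 2 + int k * m) = q ^ (k * (k + 1) div 2) * (q powi m) ^ k"
      unfolding e using q0 by (simp add: power_int_add power_int_mult mult.commute[of "int k"])
    have h2: "y powi (int k + m) = y ^ k * y powi m"
      using y by (simp add: power_int_add)
    show ?thesis unfolding h1 h2 by (simp add: cc_def power_mult_distrib)
  qed
  show ?thesis
    unfolding Aser_def FF_def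
    by (subst suminf_mult[symmetric, OF summ]) (simp add: tm)
qed

lemma Aser_rec:
  assumes y: "y \<noteq> 0" and qs: "qsetup (y^2) q"
  shows "Aser m y q + Aser (m + 2) y q = (y + inverse y - q powi (m + 1)) * Aser (m + 1) y q"
proof -
  interpret qsetup "y^2" q by fact
  define z where "z = q powi m * y"
  have p1: "q powi (m + 1) = q powi m * q" "y powi (m + 1) = y powi m * y"
    using q0 y by (simp_all add: power_int_add_1)
  have p2: "q powi (m + 2) = q powi m * q^2" "y powi (m + 2) = y powi m * y^2"
    using q0 y by (simp_all add: power_int_add)
  have r: "FF (y^2) q z + y^2 * FF (y^2) q (q^2 * z) = (1 + y^2 - q * z) * FF (y^2) q (q * z)"
    by (rule FF_rec)
  have e1: "Aser m y q = y powi m * FF (y^2) q z"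
    by (simp add: Aser_FF[OF y qs] z_def)
  have e2: "Aser (m + 1) y q = y powi m * y * FF (y^2) q (q * z)"
    by (simp add: Aser_FF[OF y qs] z_def p1 mult_ac)
  have e3: "Aser (m + 2) y q = y powi m * y^2 * FF (y^2) q (q^2 * z)"
    unfolding Aser_FF[OF y qs, of "m+2"] p2 z_def by (simp add: mult_ac)
  have "Aser m y q + Aser (m + 2) y q = y powi m * (FF (y^2) q z + y^2 * FF (y^2) q (q^2 * z))"
    unfolding e1 e3 by (simp add: algebra_simps)
  also have "\<dots> = y powi m * ((1 + y^2 - q * z) * FF (y^2) q (q * z))"
    by (simp only: r)
  also have "\<dots> = (y + inverse y - q powi (m + 1)) * Aser (m + 1) y q"
    unfolding e2 p1 z_def using y by (simp add: field_simps power2_eq_square)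
  finally show ?thesis .
qed

lemma comp0a: fixes f :: "complex \<Rightarrow> complex" and u :: "nat \<Rightarrow> complex" shows "isCont f 0 \<Longrightarrow> u \<longlonglongrightarrow> 0 \<Longrightarrow> (\<lambda>n. f (u n * d)) \<longlonglongrightarrow> f 0"
proof -
  assume c: "isCont f 0" and u: "u \<longlonglongrightarrow> 0"
  have "(\<lambda>n. u n * d) \<longlonglongrightarrow> 0" by (rule tendsto_mult_left_zero[OF u])
  then show ?thesis using isCont_tendsto_compose[OF c] by blast
qed

lemma comp0b: fixes f :: "complex \<Rightarrow> complex" and u :: "nat \<Rightarrow> complex" shows "isCont f 0 \<Longrightarrow> u \<longlonglongrightarrow> 0 \<Longrightarrow> (\<lambda>n. f (c * u n * d)) \<longlonglongrightarrow> f 0"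
proof -
  assume c: "isCont f 0" and u: "u \<longlonglongrightarrow> 0"
  have "(\<lambda>n. c * u n * d) \<longlonglongrightarrow> 0" by (rule tendsto_mult_left_zero[OF tendsto_mult_right_zero[OF u]])
  then show ?thesis using isCont_tendsto_compose[OF c] by blast
qed

theorem corollary3p3:
  fixes q x :: complex and m :: int
  assumes "norm q \<noteq> 1" and "q \<noteq> 0" and "x \<noteq> 0"
    and "\<forall>n::int. x \<noteq> q powi n \<and> inverse x \<noteq> q powi n
                 \<and> x ^ 2 \<noteq> q powi n \<and> inverse (x ^ 2) \<noteq> q powi n"
  shows "Cser m x q = (Aser m x q * LB m x q - Bser m x q * LA m x q) / (inverse x - x)
    \<and> Cser (m + 1) x q
           = (Aser (m + 1) x q * LB m x q - Bser (m + 1) x q * LA m x q) / (inverse x - x)"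
proof -
  note q1 = assms(1) and q0 = assms(2) and x0 = assms(3) and H = assms(4)
  have ix0: "inverse x \<noteq> 0" using x0 by simp
  have qa: "qsetup (x^2) q"
  proof
    fix k
    show "x^2 * q ^ Suc k \<noteq> 1"
    proof
      assume "x^2 * q ^ Suc k = 1"
      then have "x^2 = inverse (q ^ Suc k)" using q0 by (simp add: field_simps)
      also have "\<dots> = q powi (- int (Suc k))" by (simp only: power_int_minus power_int_of_nat)
      finally show False using H by blast
    qed
  qed (use q0 q1 x0 in auto)
  have qb: "qsetup ((inverse x)^2) q"
  proof
    fix k
    show "(inverse x)^2 * q ^ Suc k \<noteq> 1"
    proof
      assume "(inverse x)^2 * q ^ Suc k = 1"
      then have "x^2 = q ^ Suc k" using x0 by (simp add: field_simps power_inverse)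
      then have "x^2 = q powi (int (Suc k))" by (simp only: power_int_of_nat)
      then show False using H by blast
    qed
  qed (use q0 q1 x0 in auto)
  define W where "W m = Aser m x q * Aser (m + 1) (inverse x) q - Aser (m + 1) x q * Aser m (inverse x) q" for m
  have WS: "W (i + 1) = W i" for i
  proof -
    have ra: "Aser (i + 2) x q = (x + inverse x - q powi (i + 1)) * Aser (i + 1) x q - Aser i x q"
      using Aser_rec[OF x0 qa, of i] by (simp add: algebra_simps)
    have rb: "Aser (i + 2) (inverse x) q = (x + inverse x - q powi (i + 1)) * Aser (i + 1) (inverse x) q - Aser i (inverse x) q"
      using Aser_rec[OF ix0 qb, of i] by (simp add: algebra_simps)
    have e: "i + 1 + 1 = i + 2" by simp
    show ?thesis unfolding W_def e ra rb by (simp add: algebra_simps)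
  qed
  have Wc: "W i = W 0" for i
  proof (induction i rule: int_induct[where k=0])
    case base then show ?case by simp
  next
    case (step1 i) then show ?case using WS[of i] by simp
  next
    case (step2 i) then show ?case using WS[of "i - 1"] by simp
  qed
  define Fa where "Fa = FF (x^2) q"
  define Fb where "Fb = FF ((inverse x)^2) q"
  have Wf: "W i = inverse x * Fa (q powi i * x) * Fb (q * q powi i * inverse x)
                  - x * Fa (q * q powi i * x) * Fb (q powi i * inverse x)" for i
  proof -
    have p: "q powi (i + 1) = q * q powi i" "x powi (i + 1) = x powi i * x"
      using q0 x0 by (simp_all add: power_int_add_1')
    have p3: "x powi (1 + i) = x * x powi i" using x0 by (simp add: power_int_add)
    show ?thesis
      unfolding W_def Aser_FF[OF x0 qa] Aser_FF[OF ix0 qb] p Fa_def Fb_def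
      using x0 p p3 by (simp add: power_int_inverse field_simps)
  qed
  obtain g :: "nat \<Rightarrow> int" where g: "(\<lambda>n. q powi g n) \<longlonglongrightarrow> 0"
  proof (cases "norm q < 1")
    case True
    then have "(\<lambda>n. q powi int n) \<longlonglongrightarrow> 0" by (simp add: LIMSEQ_power_zero)
    then show ?thesis using that[of int] by simp
  next
    case False
    then have p: "norm (inverse q) < 1" using q1 q0
      by (simp add: norm_inverse inverse_less_1_iff)
    have "(\<lambda>n. q powi (- int n)) \<longlonglongrightarrow> 0"
      using LIMSEQ_power_zero[OF p] by (simp add: power_int_minus power_inverse)
    then show ?thesis using that[of "\<lambda>n. - int n"] by simp
  qed
  have ca: "isCont Fa 0" unfolding Fa_def using qa by (rule qsetup.FF_cont)
  have cb: "isCont Fb 0" unfolding Fb_def using qb by (rule qsetup.FF_cont)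
  have a0: "Fa 0 = 1" unfolding Fa_def using qa by (rule qsetup.FF0)
  have b0: "Fb 0 = 1" unfolding Fb_def using qb by (rule qsetup.FF0)
  have "(\<lambda>n. inverse x * Fa (q powi g n * x) * Fb (q * q powi g n * inverse x)
                  - x * Fa (q * q powi g n * x) * Fb (q powi g n * inverse x))
        \<longlonglongrightarrow> inverse x * Fa 0 * Fb 0 - x * Fa 0 * Fb 0"
    by (intro tendsto_intros comp0a[OF ca g] comp0a[OF cb g] comp0b[OF ca g] comp0b[OF cb g])
  then have "(\<lambda>n. W 0) \<longlonglongrightarrow> inverse x - x"
    using a0 b0 by (simp add: Wf[symmetric] Wc[of "g _"])
  then have W0: "W 0 = inverse x - x" by (simp add: LIMSEQ_const_iff)
  have Wm: "Aser m x q * Bser (m + 1) x q - Aser (m + 1) x q * Bser m x q = inverse x - x"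
    using Wc[of m] W0 by (simp add: W_def Bser_def)
  have nz: "inverse x - x \<noteq> 0"
  proof
    assume "inverse x - x = 0"
    then have "x^2 = 1" using x0 by (simp add: field_simps power2_eq_square)
    then have "x^2 = q powi 0" by simp
    then show False using H by blast
  qed
  have n1: "Aser m x q * LB m x q - Bser m x q * LA m x q
      = Cser m x q * (Aser m x q * Bser (m + 1) x q - Aser (m + 1) x q * Bser m x q)"
    unfolding LA_def LB_def by (simp add: algebra_simps)
  have n2: "Aser (m + 1) x q * LB m x q - Bser (m + 1) x q * LA m x q
      = Cser (m + 1) x q * (Aser m x q * Bser (m + 1) x q - Aser (m + 1) x q * Bser m x q)"
    unfolding LA_def LB_def by (simp add: algebra_simps)
  show ?thesis
    unfolding n1 n2 Wm using nz by simp
qed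

end
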